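(* Let $0<3x_0<L$, $\mu>0$, $\nu\in\mathbb R$, and consider $(r\ddot u)''+\mu(q\dot u)'+pu=\nu$ on $(0,2L)$. (i) If $\mu\neq1$, then $u_\nu(s)=\frac{\nu}{(2-\lambda)(1-\mu)}H(s)^{-1}$ is a solution. (ii) If $\mu=1$, then $u_\nu(s)=\frac{\nu}{2\lambda}\theta(s)(s-L)$ is a solution.
   Context: $\sigma=\pi\sqrt{x_0/(L+x_0)}$, $k=L/\sin\sigma$, $\lambda=\frac{2L}{L+x_0}$, $H(s)=\frac{\pi}{\sigma\sqrt{k^2-(s-L)^2}}$ for $s\in[0,2L]$, $\theta(s)=\int_0^sH(l)\,dl$. Set $r=2/H^3$, $q=2/H$, $p=(2-\lambda)H$; derivatives are with respect to $s$. *)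

theory Defs
  imports "HOL-Analysis.Analysis"
begin

definition sigma :: "real \<Rightarrow> real \<Rightarrow> real" where
  "sigma L x0 = pi * sqrt (x0 / (L + x0))"

definition kk :: "real \<Rightarrow> real \<Rightarrow> real" where
  "kk L x0 = L / sin (sigma L x0)"

definition lam :: "real \<Rightarrow> real \<Rightarrow> real" where
  "lam L x0 = 2 * L / (L + x0)"

definition HH :: "real \<Rightarrow> real \<Rightarrow> real \<Rightarrow> real" where
  "HH L x0 s = pi / (sigma L x0 * sqrt ((kk L x0)^2 - (s - L)^2))"

definition theta :: "real \<Rightarrow> real \<Rightarrow> real \<Rightarrow> real" where
  "theta L x0 s = integral {0..s} (HH L x0)"

definition rr :: "real \<Rightarrow> real \<Rightarrow> real \<Rightarrow> real" where
  "rr L x0 s = 2 / (HH L x0 s)^3"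

definition qq :: "real \<Rightarrow> real \<Rightarrow> real \<Rightarrow> real" where
  "qq L x0 s = 2 / HH L x0 s"

definition pp :: "real \<Rightarrow> real \<Rightarrow> real \<Rightarrow> real" where
  "pp L x0 s = (2 - lam L x0) * HH L x0 s"

definition is_solution ::
  "(real \<Rightarrow> real) \<Rightarrow> (real \<Rightarrow> real) \<Rightarrow> (real \<Rightarrow> real) \<Rightarrow> real \<Rightarrow> real \<Rightarrow> real \<Rightarrow> real
     \<Rightarrow> (real \<Rightarrow> real) \<Rightarrow> bool" where
  "is_solution r q p mu nu a b u \<longleftrightarrow>
     (\<forall>s\<in>{a<..<b}.
        u differentiable (at s) \<and>
        deriv u differentiable (at s) \<and>
        (\<lambda>t. r t * deriv (deriv u) t) differentiable (at s) \<and>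
        deriv (\<lambda>t. r t * deriv (deriv u) t) differentiable (at s) \<and>
        (\<lambda>t. q t * deriv u t) differentiable (at s) \<and>
        deriv (deriv (\<lambda>t. r t * deriv (deriv u) t)) s
          + mu * deriv (\<lambda>t. q t * deriv u t) s + p s * u s = nu)"

end

theory Submission
  imports Defs
begin

lemma tr:
  assumes "open S" "s \<in> S" "\<And>t. t \<in> S \<Longrightarrow> f t = g t" "(g has_real_derivative D) (at s)"
  shows "(f has_real_derivative D) (at s)"
  using has_field_derivative_transform_within_open[OF assms(4,1,2)] assms(3) by metis

lemma params:
  fixes L x0 :: real
  assumes "0 < 3 * x0" and "3 * x0 < L"
  shows "0 < sigma L x0" "kk L x0 > L" "(sigma L x0)^2 = pi^2 * x0/(L+x0)"
    "2 - lam L x0 = 2 * (sigma L x0)^2 / pi^2" "lam L x0 = 2 - 2 * (sigma L x0)^2 / pi^2"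
proof -
  have q: "0 < x0 / (L+x0)" "x0/(L+x0) < 1/4" using assms by (auto simp: field_simps)
  have sq: "sqrt (x0/(L+x0)) < 1/2"
    using q by (metis real_sqrt_less_iff real_sqrt_four real_sqrt_divide real_sqrt_one)
  have sp: "0 < sqrt (x0/(L+x0))" using q by simp
  show s0: "0 < sigma L x0" unfolding sigma_def using sp by simp
  have "sigma L x0 < pi/2" unfolding sigma_def using sq pi_gt_zero
    by (simp add: mult_strict_left_mono[of _ "1/2" pi, simplified])
  then have "sin (sigma L x0) < 1" using s0
    using sin_monotone_2pi[of "sigma L x0" "pi/2"] pi_gt_zero by simp
  moreover have "sin (sigma L x0) > 0" using s0 \<open>sigma L x0 < pi/2\<close> by (intro sin_gt_zero) auto
  ultimately show "kk L x0 > L" unfolding kk_def using assms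
    by (simp add: less_divide_eq)
  show ss: "(sigma L x0)^2 = pi^2 * x0/(L+x0)" unfolding sigma_def using q
    by (simp add: power_mult_distrib)
  have "L + x0 > 0" using assms by simp
  moreover have "L*pi^2 + x0*pi^2 > 0" using \<open>L + x0 > 0\<close> by (metis distrib_right mult_pos_pos pi_gt_zero zero_less_power)
  ultimately show "2 - lam L x0 = 2 * (sigma L x0)^2 / pi^2" unfolding ss lam_def
    by (simp add: field_simps)
  then show "lam L x0 = 2 - 2 * (sigma L x0)^2 / pi^2" by simp
qed

lemma sqd: "0 < K^2 - (t-L)^2 \<Longrightarrow> ((\<lambda>t. sqrt (K^2 - (t-L)^2)) has_real_derivative (-(t-L)/sqrt (K^2 - (t-L)^2))) (at (t::real))"
  apply (rule derivative_eq_intros refl | simp)+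
  by (simp add: field_simps)

lemma caseI:
  fixes L x0 mu nu :: real
  assumes "0 < 3 * x0" and "3 * x0 < L" and "mu \<noteq> 1"
  shows "is_solution (rr L x0) (qq L x0) (pp L x0) mu nu 0 (2 * L)
             (\<lambda>s. nu / ((2 - lam L x0) * (1 - mu)) * inverse (HH L x0 s))"
proof -
  define K where "K = kk L x0"
  define \<sigma> where "\<sigma> = sigma L x0"
  define W where "W = (\<lambda>t. sqrt (K^2 - (t-L)^2))"
  define S where "S = {0<..<2*L}"
  define A where "A = nu / ((2 - lam L x0) * (1 - mu))"
  define a where "a = A * \<sigma> / pi"
  have s0: "0 < \<sigma>" and KL: "L < K" and lamE: "2 - lam L x0 = 2 * \<sigma>^2 / pi^2"
    using params[OF assms(1,2)] by (auto simp: K_def \<sigma>_def)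
  have L0: "0 < L" using assms by simp
  have oS: "open S" by (simp add: S_def)
  have g0: "0 < K^2 - (t-L)^2" if "t \<in> S" for t
  proof -
    have "0 < (K-(t-L))*(K+(t-L))" using that KL by (intro mult_pos_pos) (auto simp: S_def)
    then show ?thesis by (simp add: power2_eq_square algebra_simps)
  qed
  have W0: "0 < W t" if "t \<in> S" for t using g0[OF that] by (simp add: W_def)
  have W2: "(W t)^2 = K^2 - (t-L)^2" if "t \<in> S" for t using g0[OF that] by (simp add: W_def)
  have Wd: "(W has_real_derivative (-(t-L)/W t)) (at t)" if "t \<in> S" for t
    unfolding W_def using sqd[OF g0[OF that]] by simp
  have HHe: "HH L x0 t = pi / (\<sigma> * W t)" for t by (simp add: HH_def W_def K_def \<sigma>_def)
  have ue: "(\<lambda>s. nu / ((2 - lam L x0) * (1 - mu)) * inverse (HH L x0 s)) = (\<lambda>t. a * W t)"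
    by (rule ext) (simp add: HHe a_def A_def)
  define u where "u = (\<lambda>t. a * W t)"
  define u1 where "u1 = (\<lambda>t. -a*(t-L)/W t)"
  define u2 where "u2 = (\<lambda>t. -a*K^2/(W t)^3)"
  have d1: "(u has_real_derivative u1 t) (at t)" if "t \<in> S" for t
    using Wd[OF that] unfolding u_def by (auto intro!: derivative_eq_intros simp: u1_def algebra_simps)
  have d2: "(u1 has_real_derivative u2 t) (at t)" if "t \<in> S" for t
  proof -
    have "(u1 has_real_derivative (-a * W t - (-a*(t-L)) * (-(t-L)/W t)) / (W t)^2) (at t)"
      unfolding u1_def using Wd[OF that] W0[OF that]
      apply (auto intro!: derivative_eq_intros)
      by (simp add: field_simps power2_eq_square)
    moreover have "(-a * W t - (-a*(t-L)) * (-(t-L)/W t)) / (W t)^2 = u2 t"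
    proof -
      have K2: "K^2 = (W t)^2 + (t-L)^2" using W2[OF that] by simp
      show ?thesis using W0[OF that] unfolding u2_def K2
        by (simp add: field_simps power2_eq_square power3_eq_cube)
    qed
    ultimately show ?thesis by simp
  qed
  have du: "deriv u t = u1 t" if "t \<in> S" for t using DERIV_imp_deriv[OF d1[OF that]] .
  have ddu': "(deriv u has_real_derivative u2 t) (at t)" if "t \<in> S" for t
    by (rule tr[OF oS that du d2[OF that]])
  have ddu: "deriv (deriv u) t = u2 t" if "t \<in> S" for t using DERIV_imp_deriv[OF ddu'[OF that]] .
  define C where "C = -2*a*K^2*\<sigma>^3/pi^3"
  define R where "R = (\<lambda>t. rr L x0 t * deriv (deriv u) t)"
  have Re: "R t = C" if "t \<in> S" for t
    using W0[OF that] s0 unfolding R_def ddu[OF that] rr_def HHe u2_def C_def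
    by (simp add: field_simps power3_eq_cube)
  have Rd: "(R has_real_derivative 0) (at t)" if "t \<in> S" for t
    by (rule tr[OF oS that, where g="\<lambda>_. C"]) (auto simp: Re)
  have dR: "deriv R t = 0" if "t \<in> S" for t using DERIV_imp_deriv[OF Rd[OF that]] .
  have dRd: "(deriv R has_real_derivative 0) (at t)" if "t \<in> S" for t
    by (rule tr[OF oS that, where g="\<lambda>_. 0"]) (auto simp: dR)
  define Q where "Q = (\<lambda>t. qq L x0 t * deriv u t)"
  have Qe: "Q t = -2*a*\<sigma>*(t-L)/pi" if "t \<in> S" for t
    using W0[OF that] s0 unfolding Q_def du[OF that] qq_def HHe u1_def
    by (simp add: field_simps)
  have Qd: "(Q has_real_derivative -2*a*\<sigma>/pi) (at t)" if "t \<in> S" for t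
    by (rule tr[OF oS that, where g="\<lambda>t. -2*a*\<sigma>*(t-L)/pi"]) (auto simp: Qe intro!: derivative_eq_intros)
  have fin: "0 + mu * (-2*a*\<sigma>/pi) + pp L x0 t * u t = nu" if "t \<in> S" for t
  proof -
    have "pp L x0 t * u t = (2 - lam L x0) * A"
      using W0[OF that] s0 unfolding pp_def HHe u_def a_def by (simp add: field_simps)
    moreover have "mu * (-2*a*\<sigma>/pi) = - mu * (2 - lam L x0) * A"
      unfolding lamE a_def by (simp add: field_simps power2_eq_square)
    moreover have "2 - lam L x0 \<noteq> 0" using s0 unfolding lamE by simp
    moreover have "(2 - lam L x0) * (1 - mu) * A = nu"
      using \<open>2 - lam L x0 \<noteq> 0\<close> assms(3) unfolding A_def by simp
    ultimately show ?thesis by (simp add: algebra_simps)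
  qed
  show ?thesis
    unfolding is_solution_def ue u_def[symmetric] R_def[symmetric] Q_def[symmetric] S_def[symmetric]
  proof (intro ballI conjI)
    fix s assume s: "s \<in> S"
    show "u differentiable at s" using d1[OF s] real_differentiable_def by blast
    show "deriv u differentiable at s" using ddu'[OF s] real_differentiable_def by blast
    show "R differentiable at s" using Rd[OF s] real_differentiable_def by blast
    show "deriv R differentiable at s" using dRd[OF s] real_differentiable_def by blast
    show "Q differentiable at s" using Qd[OF s] real_differentiable_def by blast
    show "deriv (deriv R) s + mu * deriv Q s + pp L x0 s * u s = nu"
      using DERIV_imp_deriv[OF dRd[OF s]] DERIV_imp_deriv[OF Qd[OF s]] fin[OF s] by simp
  qed
qed
lemma caseII:
  fixes L x0 mu nu :: real
  assumes "0 < 3 * x0" and "3 * x0 < L" and "mu = 1"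
  shows "is_solution (rr L x0) (qq L x0) (pp L x0) mu nu 0 (2 * L)
             (\<lambda>s. nu / (2 * lam L x0) * theta L x0 s * (s - L))"
proof -
  define K where "K = kk L x0"
  define \<sigma> where "\<sigma> = sigma L x0"
  define W where "W = (\<lambda>t. sqrt (K^2 - (t-L)^2))"
  define S where "S = {0<..<2*L}"
  define b where "b = nu / (2 * lam L x0)"
  have s0: "0 < \<sigma>" and KL: "L < K" and lamE: "2 - lam L x0 = 2 * \<sigma>^2 / pi^2"
    and lamE2: "lam L x0 = 2 - 2 * \<sigma>^2 / pi^2"
    using params[OF assms(1,2)] by (auto simp: K_def \<sigma>_def)
  have L0: "0 < L" using assms by simp
  have oS: "open S" by (simp add: S_def)
  have g0: "0 < K^2 - (t-L)^2" if "t \<in> {0..2*L}" for t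
  proof -
    have "0 < (K-(t-L))*(K+(t-L))" using that KL by (intro mult_pos_pos) (auto simp: S_def)
    then show ?thesis by (simp add: power2_eq_square algebra_simps)
  qed
  have g0S: "0 < K^2 - (t-L)^2" if "t \<in> S" for t using g0 that by (auto simp: S_def)
  have W0: "0 < W t" if "t \<in> S" for t using g0S[OF that] by (simp add: W_def)
  have W2: "(W t)^2 = K^2 - (t-L)^2" if "t \<in> S" for t using g0S[OF that] by (simp add: W_def)
  have Wd: "(W has_real_derivative (-(t-L)/W t)) (at t)" if "t \<in> S" for t
    unfolding W_def using sqd[OF g0S[OF that]] by simp
  have HHe: "HH L x0 t = pi / (\<sigma> * W t)" for t by (simp add: HH_def W_def K_def \<sigma>_def)
  define H where "H = (\<lambda>t. pi / (\<sigma> * W t))"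
  have HH_eq: "HH L x0 = H" by (rule ext) (simp add: HHe H_def)
  have contH: "continuous_on {0..2*L} H"
  proof -
    have nz: "\<sigma> * sqrt (K^2 - (t-L)^2) \<noteq> 0" if "t \<in> {0..2*L}" for t
      using g0[OF that] s0 by simp
    show ?thesis unfolding H_def W_def
      by (intro continuous_intros) (use nz in blast)
  qed
  define \<Theta> where "\<Theta> = theta L x0"
  have Thd: "(\<Theta> has_real_derivative H t) (at t)" if "t \<in> S" for t
  proof -
    have "(\<Theta> has_real_derivative H t) (at t within {0..2*L})"
      unfolding \<Theta>_def theta_def HH_eq
      by (rule integral_has_real_derivative[OF contH]) (use that in \<open>auto simp: S_def\<close>)
    moreover have "at t within {0..2*L} = at t"
      by (rule at_within_interior) (use that in \<open>auto simp: S_def\<close>)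
    ultimately show ?thesis by simp
  qed
  define H1 where "H1 = (\<lambda>t. pi / \<sigma> * (t-L) / (W t)^3)"
  have Hd: "(H has_real_derivative H1 t) (at t)" if "t \<in> S" for t
  proof -
    have "(H has_real_derivative (- (pi * (\<sigma> * (-(t-L)/W t))) / (\<sigma> * W t)^2)) (at t)"
      unfolding H_def using Wd[OF that] W0[OF that] s0
      apply (auto intro!: derivative_eq_intros)
      by (simp add: field_simps power2_eq_square)
    moreover have "(- (pi * (\<sigma> * (-(t-L)/W t))) / (\<sigma> * W t)^2) = H1 t"
      using W0[OF that] s0 unfolding H1_def by (simp add: field_simps power2_eq_square power3_eq_cube)
    ultimately show ?thesis by simp
  qed
  have ue: "(\<lambda>s. nu / (2 * lam L x0) * theta L x0 s * (s - L)) = (\<lambda>t. b * \<Theta> t * (t - L))"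
    by (simp add: b_def \<Theta>_def)
  define u where "u = (\<lambda>t. b * \<Theta> t * (t - L))"
  define u1 where "u1 = (\<lambda>t. b * (H t * (t-L) + \<Theta> t))"
  define u2 where "u2 = (\<lambda>t. b * (H1 t * (t-L) + 2 * H t))"
  have d1: "(u has_real_derivative u1 t) (at t)" if "t \<in> S" for t
    using Thd[OF that] unfolding u_def by (auto intro!: derivative_eq_intros simp: u1_def algebra_simps)
  have d2: "(u1 has_real_derivative u2 t) (at t)" if "t \<in> S" for t
    using Thd[OF that] Hd[OF that] unfolding u1_def by (auto intro!: derivative_eq_intros simp: u2_def algebra_simps)
  have du: "deriv u t = u1 t" if "t \<in> S" for t using DERIV_imp_deriv[OF d1[OF that]] .
  have ddu': "(deriv u has_real_derivative u2 t) (at t)" if "t \<in> S" for t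
    by (rule tr[OF oS that du d2[OF that]])
  have ddu: "deriv (deriv u) t = u2 t" if "t \<in> S" for t using DERIV_imp_deriv[OF ddu'[OF that]] .
  define e where "e = 2*b*\<sigma>^2/pi^2"
  define R where "R = (\<lambda>t. rr L x0 t * deriv (deriv u) t)"
  have Re: "R t = e * (2*K^2 - (t-L)^2)" if "t \<in> S" for t
  proof -
    have K2: "K^2 = (W t)^2 + (t-L)^2" using W2[OF that] by simp
    show ?thesis
      using W0[OF that] s0 unfolding R_def ddu[OF that] rr_def HHe u2_def e_def H1_def H_def K2
      by (simp add: field_simps power3_eq_cube power2_eq_square)
  qed
  have Rd: "(R has_real_derivative -2*e*(t-L)) (at t)" if "t \<in> S" for t
    by (rule tr[OF oS that, where g="\<lambda>t. e * (2*K^2 - (t-L)^2)"]) 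
       (auto simp: Re algebra_simps intro!: derivative_eq_intros)
  have dR: "deriv R t = -2*e*(t-L)" if "t \<in> S" for t using DERIV_imp_deriv[OF Rd[OF that]] .
  have dRd: "(deriv R has_real_derivative -2*e) (at t)" if "t \<in> S" for t
    by (rule tr[OF oS that, where g="\<lambda>t. -2*e*(t-L)"]) (auto simp: dR intro!: derivative_eq_intros)
  define Q where "Q = (\<lambda>t. qq L x0 t * deriv u t)"
  have Qe: "Q t = 2*b*(t-L) + 2*b*\<sigma>*W t*\<Theta> t/pi" if "t \<in> S" for t
    using W0[OF that] s0 unfolding Q_def du[OF that] qq_def HHe u1_def H_def
    by (simp add: field_simps)
  define Q1 where "Q1 = (\<lambda>t. 4*b - 2*b*\<sigma>*(t-L)*\<Theta> t/(pi * W t))"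
  have Qd: "(Q has_real_derivative Q1 t) (at t)" if "t \<in> S" for t
  proof -
    have "((\<lambda>t. 2*b*(t-L) + 2*b*\<sigma>*W t*\<Theta> t/pi) has_real_derivative
       2*b + 2*b*\<sigma>*((-(t-L)/W t)*\<Theta> t + W t * H t)/pi) (at t)"
      using Wd[OF that] Thd[OF that] W0[OF that]
      apply (auto intro!: derivative_eq_intros)
      by (simp add: field_simps)
    moreover have "2*b + 2*b*\<sigma>*((-(t-L)/W t)*\<Theta> t + W t * H t)/pi = Q1 t"
      using W0[OF that] s0 unfolding Q1_def H_def by (simp add: field_simps)
    ultimately have X: "((\<lambda>t. 2*b*(t-L) + 2*b*\<sigma>*W t*\<Theta> t/pi) has_real_derivative Q1 t) (at t)"
      by simp
    show ?thesis by (rule tr[OF oS that _ X]) (simp add: Qe)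
  qed
  have lam0: "lam L x0 \<noteq> 0" unfolding lam_def using assms by simp
  have fin: "-2*e + mu * Q1 t + pp L x0 t * u t = nu" if "t \<in> S" for t
  proof -
    have "pp L x0 t * u t = 2*b*\<sigma>*(t-L)*\<Theta> t/(pi * W t)"
      using W0[OF that] s0 unfolding pp_def HHe u_def lamE by (simp add: field_simps power2_eq_square)
    moreover have "2 * lam L x0 * b = nu" using lam0 unfolding b_def by simp
    ultimately show ?thesis using assms(3) unfolding Q1_def e_def lamE2
      by (simp add: field_simps)
  qed
  show ?thesis
    unfolding is_solution_def ue u_def[symmetric] R_def[symmetric] Q_def[symmetric] S_def[symmetric]
  proof (intro ballI conjI)
    fix s assume s: "s \<in> S"
    show "u differentiable at s" using d1[OF s] real_differentiable_def by blast
    show "deriv u differentiable at s" using ddu'[OF s] real_differentiable_def by blast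
    show "R differentiable at s" using Rd[OF s] real_differentiable_def by blast
    show "deriv R differentiable at s" using dRd[OF s] real_differentiable_def by blast
    show "Q differentiable at s" using Qd[OF s] real_differentiable_def by blast
    show "deriv (deriv R) s + mu * deriv Q s + pp L x0 s * u s = nu"
      using DERIV_imp_deriv[OF dRd[OF s]] DERIV_imp_deriv[OF Qd[OF s]] fin[OF s] by simp
  qed
qed


theorem mainTheorem17:
  fixes L x0 mu nu :: real
  assumes "0 < 3 * x0" and "3 * x0 < L" and "mu > 0"
  shows "(mu \<noteq> 1 \<longrightarrow>
           is_solution (rr L x0) (qq L x0) (pp L x0) mu nu 0 (2 * L)
             (\<lambda>s. nu / ((2 - lam L x0) * (1 - mu)) * inverse (HH L x0 s)))
       \<and> (mu = 1 \<longrightarrow>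
           is_solution (rr L x0) (qq L x0) (pp L x0) mu nu 0 (2 * L)
             (\<lambda>s. nu / (2 * lam L x0) * theta L x0 s * (s - L)))"
  using caseI[OF assms(1,2)] caseII[OF assms(1,2)] by blast

end
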